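(* Let $d>2$ and let $\mathbb{T}_d$ be the $d$-regular tree with conductances $c(x,y)=\frac1d$ if $x\sim y$ and $c(x,y)=0$ otherwise (the simple random walk network). Then this network satisfies the Yang-type inequality with constant $C_{YT}=\frac{8\sqrt{d-1}}{d}$; that is, for every finite subset $\Omega\subset\mathbb{T}_d$ with Dirichlet eigenvalues $\lambda_1\le\cdots\le\lambda_{|\Omega|}$ and every $k<|\Omega|$, $$\sum_{i=1}^k(\lambda_{k+1}-\lambda_i)^2(1-\lambda_i)\le \frac{8\sqrt{d-1}}{d}\sum_{i=1}^k(\lambda_{k+1}-\lambda_i)(\lambda_i-\lambda_{\min}),$$ where $\lambda_{\min}=1-\frac{2\sqrt{d-1}}{d}$ is the bottom of the $L^2$ spectrum of the Laplacian of $\mathbb{T}_d$.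
   Context: A network is a pair $(V,c)$ with $V$ countable and $c:V\times V\to[0,\infty)$ symmetric with $\pi(x):=\sum_y c(x,y)<\infty$. Its transition matrix is $P(x,y)=c(x,y)/\pi(x)$ and its Laplacian is $\Delta f(x)=\sum_y P(x,y)(f(x)-f(y))$, a bounded self-adjoint operator on $L^2(V,\pi)$ (inner product $\langle f,g\rangle=\sum_x\pi(x)f(x)\overline{g(x)}$); $\lambda_{\min}$ is the bottom of its spectrum. For finite $\Omega\subset V$, the Dirichlet Laplacian $\Delta_\Omega$ is the compression of $\Delta$ to the space $L^2(\Omega)$ of functions vanishing outside $\Omega$, i.e. $\Delta_\Omega f=\mathbf 1_\Omega\cdot\Delta f$; its eigenvalues with multiplicity in nondecreasing order are the Dirichlet eigenvalues of $\Omega$. *)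

theory Defs
  imports "Jordan_Normal_Form.Char_Poly" "HOL-Computational_Algebra.Polynomial_Factorial"
    "HOL-Analysis.Infinite_Sum"
begin

definition net_pi :: "'v set \<Rightarrow> ('v \<Rightarrow> 'v \<Rightarrow> real) \<Rightarrow> 'v \<Rightarrow> real" where
  "net_pi V c x = infsum (\<lambda>y. c x y) V"

definition net_P :: "'v set \<Rightarrow> ('v \<Rightarrow> 'v \<Rightarrow> real) \<Rightarrow> 'v \<Rightarrow> 'v \<Rightarrow> real" where
  "net_P V c x y = c x y / net_pi V c x"

text \<open>A fixed enumeration of a finite set (the eigenvalues do not depend on it).\<close>
definition enum_of :: "'v set \<Rightarrow> nat \<Rightarrow> 'v" where
  "enum_of \<Omega> = (SOME e. bij_betw e {..<card \<Omega>} \<Omega>)"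

text \<open>Matrix of the Dirichlet Laplacian Delta_Omega f = 1_Omega * Delta f on L2(Omega),
  in the basis of indicator functions of the points of Omega:
  (Delta f)(x) = sum_y P(x,y)(f x - f y) = f x - sum_y P(x,y) f y.\<close>
definition dirichlet_matrix :: "'v set \<Rightarrow> ('v \<Rightarrow> 'v \<Rightarrow> real) \<Rightarrow> 'v set \<Rightarrow> real mat" where
  "dirichlet_matrix V c \<Omega> = mat (card \<Omega>) (card \<Omega>)
     (\<lambda>(i,j). (if i = j then 1 else 0) - net_P V c (enum_of \<Omega> i) (enum_of \<Omega> j))"

text \<open>Dirichlet eigenvalues with multiplicity, in nondecreasing order (list index 0 = lambda_1).\<close>
definition dirichlet_eigenvalues :: "'v set \<Rightarrow> ('v \<Rightarrow> 'v \<Rightarrow> real) \<Rightarrow> 'v set \<Rightarrow> real list" where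
  "dirichlet_eigenvalues V c \<Omega> =
     sorted_list_of_multiset (proots (char_poly (dirichlet_matrix V c \<Omega>)))"

text \<open>Vertices: words x_1 ... x_n with x_1 < d and x_i < d - 1 for i > 1; the empty
  word is the root. The root has d
  neighbours, every other vertex has d - 1 children and one parent.\<close>
definition tree_vertices :: "nat \<Rightarrow> nat list set" where
  "tree_vertices d = {xs. \<forall>i<length xs. xs ! i < (if i = 0 then d else d - 1)}"

definition tree_adj :: "nat list \<Rightarrow> nat list \<Rightarrow> bool" where
  "tree_adj x y \<longleftrightarrow> (\<exists>a. y = x @ [a]) \<or> (\<exists>a. x = y @ [a])"

definition tree_cond :: "nat \<Rightarrow> nat list \<Rightarrow> nat list \<Rightarrow> real" where
  "tree_cond d x y = (if x \<in> tree_vertices d \<and> y \<in> tree_vertices d \<and> tree_adj x y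
                       then 1 / real d else 0)"

end

theory Submission
  imports Defs "Jordan_Normal_Form.Schur_Decomposition"
begin


lemma sym_eig_real:
  fixes A :: "real mat"
  assumes A: "A \<in> carrier_mat n n" and sym: "\<And>i j. i < n \<Longrightarrow> j < n \<Longrightarrow> A $$ (i,j) = A $$ (j,i)"
    and ev: "eigenvalue (map_mat complex_of_real A) a"
  shows "cnj a = a"
proof -
  let ?B = "map_mat complex_of_real A"
  from ev obtain v where v: "eigenvector ?B v a" unfolding eigenvalue_def by auto
  hence vc: "v \<in> carrier_vec n" and v0: "v \<noteq> 0\<^sub>v n" and eq: "?B *\<^sub>v v = a \<cdot>\<^sub>v v"
    using A unfolding eigenvector_def by auto
  have Bv: "(\<Sum>j<n. complex_of_real (A $$ (i,j)) * v $ j) = a * v $ i" if i: "i < n" for i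
  proof -
    have "(?B *\<^sub>v v) $ i = (a \<cdot>\<^sub>v v) $ i" using eq by simp
    thus ?thesis using i A vc
      by (simp add: scalar_prod_def row_def lessThan_atLeast0 mult.commute)
  qed
  define s where "s = (\<Sum>i<n. cnj (v $ i) * (\<Sum>j<n. complex_of_real (A $$ (i,j)) * v $ j))"
  define N where "N = (\<Sum>i<n. cnj (v $ i) * v $ i)"
  have "s = (\<Sum>i<n. cnj (v $ i) * (a * v $ i))" unfolding s_def
    by (intro sum.cong refl) (simp add: Bv)
  hence s1: "s = a * N" unfolding N_def
    by (simp add: sum_distrib_left mult.commute mult.left_commute)
  have "cnj s = (\<Sum>i<n. v $ i * (\<Sum>j<n. complex_of_real (A $$ (i,j)) * cnj (v $ j)))"
    unfolding s_def by (simp add: cnj_sum)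
  also have "\<dots> = (\<Sum>i<n. \<Sum>j<n. complex_of_real (A $$ (i,j)) * v $ i * cnj (v $ j))"
    by (simp add: sum_distrib_left mult.commute mult.left_commute)
  also have "\<dots> = (\<Sum>j<n. \<Sum>i<n. complex_of_real (A $$ (i,j)) * v $ i * cnj (v $ j))"
    by (rule sum.swap)
  also have "\<dots> = (\<Sum>j<n. \<Sum>i<n. complex_of_real (A $$ (j,i)) * v $ i * cnj (v $ j))"
    by (intro sum.cong refl, simp add: sym)
  also have "\<dots> = s" unfolding s_def
    by (simp add: sum_distrib_left mult.commute mult.left_commute)
  finally have s2: "cnj s = s" .
  have Nreal: "N = complex_of_real (\<Sum>i<n. (cmod (v $ i))^2)"
    unfolding N_def of_real_sum by (intro sum.cong refl) (metis complex_norm_square mult.commute of_real_power)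
  obtain i where i: "i < n" "v $ i \<noteq> 0" using v0 vc by (metis carrier_vecD eq_vecI index_zero_vec(1) index_zero_vec(2))
  have Rpos: "(\<Sum>i<n. (cmod (v $ i))^2) > 0"
  proof -
    have "(cmod (v $ i))^2 > 0" using i by simp
    moreover have "(cmod (v $ i))^2 \<le> (\<Sum>i<n. (cmod (v $ i))^2)"
      using i by (intro member_le_sum) auto
    ultimately show ?thesis by linarith
  qed
  have N0: "N \<noteq> 0" unfolding Nreal using Rpos by (metis of_real_eq_0_iff less_irrefl)
  have cN: "cnj N = N" unfolding Nreal by (rule complex_cnj_complex_of_real)
  from s2 s1 have "cnj a * N = a * N" using cN by simp
  thus ?thesis using N0 by simp
qed

lemma map_poly_of_real_prod_list:
  "map_poly complex_of_real (\<Prod>r\<leftarrow>rs. [:-r,1:]) = (\<Prod>r\<leftarrow>rs. [:- complex_of_real r,1:])"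
proof -
  interpret m: map_poly_comm_ring_hom "complex_of_real" ..
  show ?thesis
  proof (induction rs)
    case (Cons a rs)
    have "map_poly complex_of_real (\<Prod>r\<leftarrow>a#rs. [:-r,1:]) = map_poly complex_of_real [:-a,1:] * map_poly complex_of_real (\<Prod>r\<leftarrow>rs. [:-r,1:])"
      unfolding list.map prod_list.Cons by (rule m.hom_mult)
    thus ?case using Cons by simp
  qed simp
qed

lemma sym_char_poly_split:
  fixes A :: "real mat"
  assumes A: "A \<in> carrier_mat n n" and sym: "\<And>i j. i < n \<Longrightarrow> j < n \<Longrightarrow> A $$ (i,j) = A $$ (j,i)"
  shows "\<exists>rs. char_poly A = (\<Prod>r\<leftarrow>rs. [:-r,1:])"
proof -
  let ?B = "map_mat complex_of_real A"
  have B: "?B \<in> carrier_mat n n" using A by simp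
  obtain as where as: "char_poly ?B = (\<Prod>a\<leftarrow>as. [:-a,1:])" using char_poly_factorized[OF B] by auto
  have real: "cnj a = a" if a: "a \<in> set as" for a
  proof (rule sym_eig_real[OF A sym])
    have "poly (char_poly ?B) a = 0" unfolding as using a
      by (simp add: poly_prod_list prod_list_zero_iff)
    thus "eigenvalue ?B a" using eigenvalue_root_char_poly[OF B] by simp
  qed auto
  define rs where "rs = map Re as"
  have asrs: "as = map complex_of_real rs" unfolding rs_def
    using real by (induction as) (auto simp: complex_eq_iff)
  have "map_poly complex_of_real (char_poly A) = char_poly ?B"
    by (rule of_real_hom.char_poly_hom[OF A, symmetric])
  also have "\<dots> = map_poly complex_of_real (\<Prod>r\<leftarrow>rs. [:-r,1:])"
    unfolding as asrs map_poly_of_real_prod_list by (simp add: o_def)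
  finally have "char_poly A = (\<Prod>r\<leftarrow>rs. [:-r,1:])"
    by (metis (no_types, lifting) coeff_map_poly of_real_eq_iff of_real_0 poly_eqI)
  thus ?thesis by blast
qed

lemma conj_real_vec[simp]: "conjugate (w :: real vec) = w"
  by (intro eq_vecI) auto

lemma real_self_sprod_nonneg: "(w :: real vec) \<bullet> w \<ge> 0"
  by (simp add: scalar_prod_def sum_nonneg)

lemma mat_assoc4: "X \<in> carrier_mat n n \<Longrightarrow> Y \<in> carrier_mat n n \<Longrightarrow> Z \<in> carrier_mat n n \<Longrightarrow>
  Q \<in> carrier_mat n n \<Longrightarrow> X * Y * (Z * Q) = X * (Y * Z) * (Q :: 'a :: comm_ring_1 mat)"
proof -
  assume X: "X \<in> carrier_mat n n" and Y: "Y \<in> carrier_mat n n" and Z: "Z \<in> carrier_mat n n"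
    and Q: "Q \<in> carrier_mat n n"
  have ZQ: "Z * Q \<in> carrier_mat n n" and YZ: "Y * Z \<in> carrier_mat n n" using Z Q Y by auto
  have "X * Y * (Z * Q) = X * (Y * (Z * Q))" using assoc_mult_mat[OF X Y ZQ] .
  also have "Y * (Z * Q) = Y * Z * Q" using assoc_mult_mat[OF Y Z Q] by simp
  also have "X * (Y * Z * Q) = X * (Y * Z) * Q" using assoc_mult_mat[OF X YZ Q] by simp
  finally show ?thesis .
qed

lemma mat_assoc5: "X \<in> carrier_mat n n \<Longrightarrow> Y \<in> carrier_mat n n \<Longrightarrow> Z \<in> carrier_mat n n \<Longrightarrow>
  V \<in> carrier_mat n n \<Longrightarrow> Q \<in> carrier_mat n n \<Longrightarrow> X * Y * Z * (V * Q) = X * (Y * Z * V) * (Q :: 'a :: comm_ring_1 mat)"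
proof -
  assume X: "X \<in> carrier_mat n n" and Y: "Y \<in> carrier_mat n n" and Z: "Z \<in> carrier_mat n n"
    and V: "V \<in> carrier_mat n n" and Q: "Q \<in> carrier_mat n n"
  have XY: "X * Y \<in> carrier_mat n n" and ZV: "Z * V \<in> carrier_mat n n" using X Y Z V by auto
  have "X * Y * Z * (V * Q) = X * Y * (Z * V) * Q" using mat_assoc4[OF XY Z V Q] .
  also have "X * Y * (Z * V) = X * (Y * (Z * V))" using assoc_mult_mat[OF X Y ZV] .
  also have "Y * (Z * V) = Y * Z * V" using assoc_mult_mat[OF Y Z V] by simp
  finally show ?thesis .
qed

lemma spectral_sym:
  fixes A :: "real mat"
  assumes "A \<in> carrier_mat n n" "A\<^sup>T = A" "char_poly A = (\<Prod>r\<leftarrow>rs. [:-r,1:])"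
  shows "\<exists>U \<in> carrier_mat n n. U\<^sup>T * U = 1\<^sub>m n \<and>
           U\<^sup>T * A * U = mat n n (\<lambda>(i,j). if i = j then rs ! i else 0)"
  using assms
proof (induction rs arbitrary: n A)
  case Nil
  have "n = 0" using degree_monic_char_poly[OF Nil(1)] Nil(3) by simp
  then show ?case using Nil(1) by (intro bexI[of _ "1\<^sub>m 0"]) (auto intro!: eq_matI)
next
  case (Cons r rs n A)
  note A = Cons(2) and symA = Cons(3) and cp = Cons(4)
  have "n \<noteq> 0"
  proof
    assume "n = 0"
    hence "degree (char_poly A) = 0" using degree_monic_char_poly[OF A] by simp
    moreover have "degree (\<Prod>r\<leftarrow>r#rs. [:-r,1:]) = Suc (length rs)"
      by (subst degree_linear_factors) simp
    ultimately show False using cp by simp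
  qed
  then obtain m where n: "n = Suc m" by (cases n) auto
  have e: "eigenvalue A r" unfolding eigenvalue_root_char_poly[OF A] cp by simp
  define v where "v = find_eigenvector A r"
  from find_eigenvector[OF A e] have "eigenvector A v r" unfolding v_def .
  hence v: "v \<in> carrier_vec n" and v0: "v \<noteq> 0\<^sub>v n" and Av: "A *\<^sub>v v = r \<cdot>\<^sub>v v"
    using A unfolding eigenvector_def by auto
  interpret cof_vec_space n "TYPE(real)" .
  define b where "b = basis_completion v"
  from basis_completion[OF v v0, folded b_def]
  have dist_b: "distinct b" and indep: "\<not> lin_dep (set b)" and b: "set b \<subseteq> carrier_vec n"
    and hdb: "hd b = v" and len_b: "length b = n" by auto
  from hdb len_b n obtain vs where bv: "b = v # vs" by (cases b) auto
  define ws where "ws = gram_schmidt n b"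
  from gram_schmidt_result[OF b dist_b indep refl, folded ws_def]
  have ws: "set ws \<subseteq> carrier_vec n" "corthogonal ws" "length ws = n"
    by (auto simp: len_b)
  have hdws: "hd ws = v" using gram_schmidt_hd[OF v, of vs] unfolding ws_def bv .
  have ws0: "ws ! 0 = v" using hdws ws(3) n by (cases ws) auto
  have wsc: "ws ! i \<in> carrier_vec n" if "i < n" for i using ws that by auto
  have wsorth: "ws ! i \<bullet> ws ! j = 0 \<longleftrightarrow> i \<noteq> j" if "i < n" "j < n" for i j
    using corthogonalD[OF ws(2), of i j] that ws(3) by simp
  define us where "us = map (\<lambda>w. (1 / sqrt (w \<bullet> w)) \<cdot>\<^sub>v w) ws"
  have len_us: "length us = n" unfolding us_def using ws by simp
  have usc: "us ! i \<in> carrier_vec n" if "i < n" for i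
    unfolding us_def using wsc[OF that] that ws(3) by simp
  have usorth: "us ! i \<bullet> us ! j = (if i = j then 1 else 0)" if ij: "i < n" "j < n" for i j
  proof -
    have ui: "us ! i = (1 / sqrt (ws!i \<bullet> ws!i)) \<cdot>\<^sub>v ws ! i" unfolding us_def using ij ws(3) by simp
    have uj: "us ! j = (1 / sqrt (ws!j \<bullet> ws!j)) \<cdot>\<^sub>v ws ! j" unfolding us_def using ij ws(3) by simp
    have "us ! i \<bullet> us ! j = (1 / sqrt (ws!i \<bullet> ws!i)) * (1 / sqrt (ws!j \<bullet> ws!j)) * (ws!i \<bullet> ws!j)"
      unfolding ui uj using wsc[OF ij(1)] wsc[OF ij(2)] by simp
    moreover have "ws!i \<bullet> ws!i > 0" using wsorth[OF ij(1) ij(1)] real_self_sprod_nonneg[of "ws!i"] by simp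
    ultimately show ?thesis using wsorth[OF ij]
      by (cases "i = j") (auto simp: real_sqrt_mult[symmetric])
  qed
  define W where "W = mat_of_cols n us"
  have W: "W \<in> carrier_mat n n" unfolding W_def using mat_of_cols_carrier(1)[of n us] len_us by simp
  have colW: "col W i = us ! i" if "i < n" for i
    unfolding W_def using that len_us usc by (simp add: col_mat_of_cols)
  have WtW: "W\<^sup>T * W = 1\<^sub>m n"
  proof (rule eq_matI)
    fix i j assume "i < dim_row (1\<^sub>m n :: real mat)" "j < dim_col (1\<^sub>m n :: real mat)"
    hence ij: "i < n" "j < n" by auto
    show "(W\<^sup>T * W) $$ (i, j) = 1\<^sub>m n $$ (i, j)"
      using ij W by (simp add: colW usorth)
  qed (use W in auto)
  have WWt: "W * W\<^sup>T = 1\<^sub>m n" using mat_mult_left_right_inverse[OF _ W WtW] W by simp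
  define A' where "A' = W\<^sup>T * A * W"
  have A': "A' \<in> carrier_mat n n" unfolding A'_def using W A by simp
  have symA': "A'\<^sup>T = A'"
  proof -
    have "A'\<^sup>T = (W\<^sup>T * (A * W))\<^sup>T" unfolding A'_def using W A by simp
    also have "\<dots> = (A * W)\<^sup>T * W\<^sup>T\<^sup>T" using W A by (intro transpose_mult) auto
    also have "\<dots> = W\<^sup>T * A\<^sup>T * W" using W A by (simp add: transpose_mult[of A n n W n])
    finally show ?thesis unfolding A'_def symA .
  qed
  have A'0: "A' $$ (i,0) = (if i = 0 then r else 0)" if i: "i < n" for i
  proof -
    define c where "c = 1 / sqrt (v \<bullet> v)"
    have us0: "us ! 0 = c \<cdot>\<^sub>v v" unfolding us_def c_def using n ws0 ws(3) by simp
    have "A' = W\<^sup>T * (A * W)" unfolding A'_def using W A by simp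
    hence "A' $$ (i,0) = row W\<^sup>T i \<bullet> col (A * W) 0" using W A i n by simp
    also have "row W\<^sup>T i = us ! i" using W i colW[OF i] by simp
    also have "col (A * W) 0 = A *\<^sub>v col W 0" using col_mult2[OF A W, of 0] n by blast
    also have "col W 0 = c \<cdot>\<^sub>v v" using colW[of 0] n us0 by simp
    also have "A *\<^sub>v (c \<cdot>\<^sub>v v) = r \<cdot>\<^sub>v (c \<cdot>\<^sub>v v)"
      using mult_mat_vec[OF A v, of c] Av by (auto simp: smult_smult_assoc mult.commute)
    also have "us ! i \<bullet> (r \<cdot>\<^sub>v (c \<cdot>\<^sub>v v)) = r * (us ! i \<bullet> us ! 0)"
      using usc[OF i] v by (simp add: us0)
    finally show ?thesis using usorth[OF i, of 0] n by simp
  qed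
  have A'0': "A' $$ (0,j) = (if j = 0 then r else 0)" if j: "j < n" for j
    using A'0[OF j] arg_cong[OF symA', of "\<lambda>M. M $$ (j,0)"] A' j n by simp
  define A3 where "A3 = mat m m (\<lambda>(i,j). A' $$ (Suc i, Suc j))"
  have A3: "A3 \<in> carrier_mat m m" unfolding A3_def by simp
  have A'blk: "A' = four_block_mat (mat 1 1 (\<lambda>_. r)) (0\<^sub>m 1 m) (0\<^sub>m m 1) A3"
  proof (rule eq_matI)
    fix i j assume "i < dim_row (four_block_mat (mat 1 1 (\<lambda>_. r)) (0\<^sub>m 1 m) (0\<^sub>m m 1) A3)"
      "j < dim_col (four_block_mat (mat 1 1 (\<lambda>_. r)) (0\<^sub>m 1 m) (0\<^sub>m m 1) A3)"
    hence ij: "i < Suc m" "j < Suc m" using A3 by auto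
    show "A' $$ (i, j) = four_block_mat (mat 1 1 (\<lambda>_. r)) (0\<^sub>m 1 m) (0\<^sub>m m 1) A3 $$ (i, j)"
    proof (cases "i = 0")
      case True thus ?thesis using A'0'[of j] ij n A3 by simp
    next
      case False
      then obtain i' where i': "i = Suc i'" by (cases i) auto
      show ?thesis
      proof (cases "j = 0")
        case True thus ?thesis using A'0[of i] ij n A3 i' by simp
      next
        case False
        then obtain j' where j': "j = Suc j'" by (cases j) auto
        thus ?thesis using ij i' A3 by (simp add: A3_def)
      qed
    qed
  qed (use A' A3 n in auto)
  have "similar_mat_wit A A' W W\<^sup>T"
  proof (rule similar_mat_witI[of _ _ n])
    have "W * A' * W\<^sup>T = W * W\<^sup>T * A * W * W\<^sup>T" unfolding A'_def using W A
      by (simp del: assoc_mult_mat add: assoc_mult_mat[symmetric, of _ n n _ n _ n])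
    also have "\<dots> = A * W * W\<^sup>T" using W A by (simp del: assoc_mult_mat add: WWt)
    also have "\<dots> = A * (W * W\<^sup>T)" using W A by simp
    also have "\<dots> = A" using A by (simp add: WWt)
    finally show "A = W * A' * W\<^sup>T" by simp
  qed (use WtW WWt A A' W in auto)
  hence "similar_mat A A'" unfolding similar_mat_def by blast
  hence "char_poly A = char_poly A'" by (rule char_poly_similar)
  also have "\<dots> = char_poly (mat 1 1 (\<lambda>_. r)) * char_poly A3"
    unfolding A'blk by (rule char_poly_four_block_zeros_col[OF _ _ A3]) auto
  also have "char_poly (mat 1 1 (\<lambda>_. r)) = [:-r, 1:]"
    by (simp add: char_poly_defs det_def sign_def)
  finally have "[:-r, 1:] * char_poly A3 = [:-r, 1:] * (\<Prod>r\<leftarrow>rs. [:-r,1:])" using cp by simp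
  hence cp3: "char_poly A3 = (\<Prod>r\<leftarrow>rs. [:-r,1:])"
    by (subst (asm) mult_left_cancel) simp_all
  have sym3: "A3\<^sup>T = A3"
  proof (rule eq_matI)
    fix i j assume "i < dim_row A3" "j < dim_col A3"
    hence ij: "i < m" "j < m" using A3 by auto
    show "A3\<^sup>T $$ (i, j) = A3 $$ (i, j)"
      using ij arg_cong[OF symA', of "\<lambda>M. M $$ (Suc i, Suc j)"] A' n by (simp add: A3_def)
  qed (use A3 in auto)
  from Cons.IH[OF A3 sym3 cp3] obtain U' where U': "U' \<in> carrier_mat m m"
    and U'1: "U'\<^sup>T * U' = 1\<^sub>m m"
    and U'2: "U'\<^sup>T * A3 * U' = mat m m (\<lambda>(i,j). if i = j then rs ! i else 0)" by blast
  define Bk where "Bk = four_block_mat (1\<^sub>m 1) (0\<^sub>m 1 m) (0\<^sub>m m 1) U'"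
  have "Bk \<in> carrier_mat (1+m) (1+m)" unfolding Bk_def using U' by (intro four_block_carrier_mat) auto
  hence Bk: "Bk \<in> carrier_mat n n" using n by simp
  have BkT: "Bk\<^sup>T = four_block_mat (1\<^sub>m 1) (0\<^sub>m 1 m) (0\<^sub>m m 1) U'\<^sup>T"
    unfolding Bk_def using U' by (subst transpose_four_block_mat) auto
  have BkTc: "Bk\<^sup>T \<in> carrier_mat n n" and WTc: "W\<^sup>T \<in> carrier_mat n n" using Bk W by auto
  define U where "U = W * Bk"
  have U: "U \<in> carrier_mat n n" unfolding U_def using W Bk by simp
  have UT: "U\<^sup>T = Bk\<^sup>T * W\<^sup>T" unfolding U_def using W Bk by (simp add: transpose_mult)
  have "U\<^sup>T * U = Bk\<^sup>T * (W\<^sup>T * W) * Bk" unfolding UT unfolding U_def by (rule mat_assoc4[OF BkTc WTc W Bk])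
  also have "\<dots> = Bk\<^sup>T * Bk" using Bk by (simp add: WtW)
  also have "\<dots> = 1\<^sub>m n" unfolding BkT unfolding Bk_def using U' n
    by (subst mult_four_block_mat[of _ 1 1 _ m _ m _ _ 1 _ m]) (auto simp: U'1)
  finally have UU: "U\<^sup>T * U = 1\<^sub>m n" .
  have "U\<^sup>T * A * U = Bk\<^sup>T * A' * Bk" unfolding UT unfolding U_def A'_def by (rule mat_assoc5[OF BkTc WTc A W Bk])
  also have "\<dots> = four_block_mat (mat 1 1 (\<lambda>_. r)) (0\<^sub>m 1 m) (0\<^sub>m m 1) (U'\<^sup>T * A3 * U')"
    unfolding BkT unfolding Bk_def A'blk using U' A3
    by (simp add: mult_four_block_mat[of _ 1 1 _ m _ m _ _ 1 _ m])
  also have "\<dots> = mat n n (\<lambda>(i,j). if i = j then (r#rs) ! i else 0)"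
  proof (rule eq_matI)
    fix i j assume "i < dim_row (mat n n (\<lambda>(i,j). if i = j then (r#rs) ! i else (0::real)))"
      "j < dim_col (mat n n (\<lambda>(i,j). if i = j then (r#rs) ! i else (0::real)))"
    hence ij: "i < Suc m" "j < Suc m" using n by auto
    show "four_block_mat (mat 1 1 (\<lambda>_. r)) (0\<^sub>m 1 m) (0\<^sub>m m 1) (U'\<^sup>T * A3 * U') $$ (i, j) =
      mat n n (\<lambda>(i,j). if i = j then (r#rs) ! i else 0) $$ (i, j)"
      using ij n U' A3 by (auto simp: U'2 nth_Cons')
  qed (use n U' A3 in auto)
  finally show ?case using U UU by blast
qed



lemma yang_real_ineq:
  fixes lam :: "nat \<Rightarrow> real" and a :: "nat \<Rightarrow> nat \<Rightarrow> real"
  assumes sorted: "\<And>i j. i \<le> j \<Longrightarrow> j < n \<Longrightarrow> lam i \<le> lam j" and k: "k < n"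
    and asym: "\<And>i j. a i j = a j i"
  shows "(\<Sum>i<k. (lam k - lam i)^2 * (\<Sum>j<n. (lam j - lam i) * (a i j * a i j)))
         \<le> (\<Sum>i<k. (lam k - lam i) * (\<Sum>j<n. ((lam j - lam i) * a i j)^2))"
proof -
  define F where "F i j = (lam k - lam i) * (lam j - lam i) * (lam j - lam k) * (a i j)^2" for i j
  have diff: "(\<Sum>i<k. (lam k - lam i) * (\<Sum>j<n. ((lam j - lam i) * a i j)^2))
      - (\<Sum>i<k. (lam k - lam i)^2 * (\<Sum>j<n. (lam j - lam i) * (a i j * a i j)))
      = (\<Sum>i<k. \<Sum>j<n. F i j)"
    unfolding sum_subtractf[symmetric] sum_distrib_left
    by (intro sum.cong refl) (simp add: F_def power2_eq_square algebra_simps)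
  have split: "(\<Sum>j<n. F i j) = (\<Sum>j<k. F i j) + (\<Sum>j\<in>{k..<n}. F i j)" for i
    using k by (simp add: lessThan_atLeast0 sum.atLeastLessThan_concat)
  have T0: "(\<Sum>i<k. \<Sum>j<k. F i j) = 0"
  proof -
    have "(\<Sum>i<k. \<Sum>j<k. F i j) = (\<Sum>j<k. \<Sum>i<k. F i j)" by (rule sum.swap)
    also have "\<dots> = (\<Sum>i<k. \<Sum>j<k. - F i j)"
      by (intro sum.cong refl) (simp add: F_def asym algebra_simps)
    also have "\<dots> = - (\<Sum>i<k. \<Sum>j<k. F i j)" by (simp add: sum_negf)
    finally show ?thesis by simp
  qed
  have T1: "(\<Sum>i<k. \<Sum>j\<in>{k..<n}. F i j) \<ge> 0"
  proof (intro sum_nonneg)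
    fix i j assume i: "i \<in> {..<k}" and j: "j \<in> {k..<n}"
    have "lam i \<le> lam k" "lam k \<le> lam j" using i j k sorted by auto
    thus "F i j \<ge> 0" unfolding F_def by (intro mult_nonneg_nonneg) auto
  qed
  have "(\<Sum>i<k. \<Sum>j<n. F i j) = (\<Sum>i<k. \<Sum>j<k. F i j) + (\<Sum>i<k. \<Sum>j\<in>{k..<n}. F i j)"
    by (simp add: split sum.distrib)
  with T0 T1 diff show ?thesis by linarith
qed

definition commv :: "nat \<Rightarrow> (nat \<Rightarrow> nat \<Rightarrow> real) \<Rightarrow> (nat \<Rightarrow> real) \<Rightarrow> (nat \<Rightarrow> nat \<Rightarrow> real) \<Rightarrow> nat \<Rightarrow> nat \<Rightarrow> real" where
  "commv n Mf g U i x = (\<Sum>y<n. Mf x y * (g y - g x) * U y i)"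

lemma yang_abstract:
  fixes n k :: nat and Mf U :: "nat \<Rightarrow> nat \<Rightarrow> real" and lam g :: "nat \<Rightarrow> real"
  assumes sym: "\<And>x y. x < n \<Longrightarrow> y < n \<Longrightarrow> Mf x y = Mf y x"
    and orth2: "\<And>x y. x < n \<Longrightarrow> y < n \<Longrightarrow> (\<Sum>i<n. U x i * U y i) = (if x = y then 1 else 0)"
    and eig: "\<And>x i. x < n \<Longrightarrow> i < n \<Longrightarrow> (\<Sum>y<n. Mf x y * U y i) = lam i * U x i"
    and sorted: "\<And>i j. i \<le> j \<Longrightarrow> j < n \<Longrightarrow> lam i \<le> lam j" and k: "k < n"
  shows "(\<Sum>i<k. (lam k - lam i)^2 * (\<Sum>x<n. commv n Mf g U i x * g x * U x i))
         \<le> (\<Sum>i<k. (lam k - lam i) * (\<Sum>x<n. (commv n Mf g U i x)^2))"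
proof -
  define a where "a i j = (\<Sum>x<n. g x * U x i * U x j)" for i j
  have asym: "a i j = a j i" for i j unfolding a_def by (simp add: mult.commute mult.left_commute)
  have pars: "(\<Sum>x<n. f x * h x) = (\<Sum>j<n. (\<Sum>x<n. f x * U x j) * (\<Sum>y<n. h y * U y j))" for f h
  proof -
    have "(\<Sum>j<n. (\<Sum>x<n. f x * U x j) * (\<Sum>y<n. h y * U y j))
        = (\<Sum>j<n. \<Sum>x<n. \<Sum>y<n. f x * h y * (U x j * U y j))"
      unfolding sum_product by (intro sum.cong refl) (simp add: ac_simps)
    also have "\<dots> = (\<Sum>x<n. \<Sum>j<n. \<Sum>y<n. f x * h y * (U x j * U y j))" by (rule sum.swap)
    also have "\<dots> = (\<Sum>x<n. \<Sum>y<n. \<Sum>j<n. f x * h y * (U x j * U y j))"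
      by (intro sum.cong refl sum.swap)
    also have "\<dots> = (\<Sum>x<n. \<Sum>y<n. f x * h y * (if x = y then 1 else 0))"
      by (intro sum.cong refl) (simp add: sum_distrib_left[symmetric] orth2)
    also have "\<dots> = (\<Sum>x<n. f x * h x)"
      by (intro sum.cong refl) (simp add: if_distrib cong: if_cong)
    finally show ?thesis by simp
  qed
  have C: "(\<Sum>x<n. commv n Mf g U i x * U x j) = (lam j - lam i) * a i j" if ij: "i < n" "j < n" for i j
  proof -
    have "(\<Sum>x<n. commv n Mf g U i x * U x j)
        = (\<Sum>x<n. \<Sum>y<n. Mf x y * g y * U y i * U x j) - (\<Sum>x<n. g x * U x j * (\<Sum>y<n. Mf x y * U y i))"
      unfolding commv_def sum_subtractf[symmetric] sum_distrib_left sum_distrib_right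
      by (intro sum.cong refl) (simp add: algebra_simps)
    also have "(\<Sum>x<n. g x * U x j * (\<Sum>y<n. Mf x y * U y i)) = (\<Sum>x<n. lam i * (g x * U x i * U x j))"
      by (intro sum.cong refl) (simp add: eig ij)
    also have "\<dots> = lam i * a i j" by (simp add: a_def sum_distrib_left)
    also have "(\<Sum>x<n. \<Sum>y<n. Mf x y * g y * U y i * U x j) = (\<Sum>y<n. \<Sum>x<n. Mf x y * g y * U y i * U x j)"
      by (rule sum.swap)
    also have "\<dots> = (\<Sum>y<n. g y * U y i * (\<Sum>x<n. Mf y x * U x j))"
      unfolding sum_distrib_left
      by (intro sum.cong refl) (simp add: sym algebra_simps)
    also have "\<dots> = (\<Sum>y<n. lam j * (g y * U y i * U y j))"
      by (intro sum.cong refl) (simp add: eig ij)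
    also have "\<dots> = lam j * a i j" by (simp add: a_def sum_distrib_left)
    finally show ?thesis by (simp add: algebra_simps)
  qed
  have W: "(\<Sum>x<n. commv n Mf g U i x * g x * U x i) = (\<Sum>j<n. (lam j - lam i) * (a i j * a i j))"
    if i: "i < n" for i
  proof -
    have "(\<Sum>x<n. commv n Mf g U i x * g x * U x i) = (\<Sum>x<n. commv n Mf g U i x * (g x * U x i))"
      by (simp add: mult.assoc)
    also have "\<dots> = (\<Sum>j<n. (\<Sum>x<n. commv n Mf g U i x * U x j) * (\<Sum>y<n. g y * U y i * U y j))"
      by (subst pars) (simp add: mult.assoc)
    also have "\<dots> = (\<Sum>j<n. (lam j - lam i) * (a i j * a i j))"
      by (intro sum.cong refl) (simp add: C i a_def)
    finally show ?thesis .
  qed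
  have N: "(\<Sum>x<n. (commv n Mf g U i x)^2) = (\<Sum>j<n. ((lam j - lam i) * a i j)^2)"
    if i: "i < n" for i
  proof -
    have "(\<Sum>x<n. (commv n Mf g U i x)^2) = (\<Sum>x<n. commv n Mf g U i x * commv n Mf g U i x)"
      by (simp add: power2_eq_square)
    also have "\<dots> = (\<Sum>j<n. (\<Sum>x<n. commv n Mf g U i x * U x j) * (\<Sum>y<n. commv n Mf g U i y * U y j))"
      by (rule pars)
    also have "\<dots> = (\<Sum>j<n. ((lam j - lam i) * a i j)^2)"
      by (intro sum.cong refl) (simp add: C i power2_eq_square)
    finally show ?thesis .
  qed
  have "(\<Sum>i<k. (lam k - lam i)^2 * (\<Sum>x<n. commv n Mf g U i x * g x * U x i))
      = (\<Sum>i<k. (lam k - lam i)^2 * (\<Sum>j<n. (lam j - lam i) * (a i j * a i j)))"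
    using k by (intro sum.cong refl) (simp add: W)
  also have "\<dots> \<le> (\<Sum>i<k. (lam k - lam i) * (\<Sum>j<n. ((lam j - lam i) * a i j)^2))"
    by (rule yang_real_ineq[OF sorted k asym]) auto
  also have "\<dots> = (\<Sum>i<k. (lam k - lam i) * (\<Sum>x<n. (commv n Mf g U i x)^2))"
    using k by (intro sum.cong refl) (simp add: N)
  finally show ?thesis .
qed



lemma cs_weighted:
  fixes w u :: "nat \<Rightarrow> real"
  assumes w: "\<And>y. y < n \<Longrightarrow> w y \<ge> 0"
  shows "(\<Sum>y<n. w y * u y)^2 \<le> (\<Sum>y<n. w y) * (\<Sum>y<n. w y * (u y)^2)"
proof -
  have "0 \<le> (\<Sum>y<n. \<Sum>z<n. w y * w z * (u y - u z)^2)"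
    using w by (intro sum_nonneg) auto
  also have "\<dots> = (\<Sum>y<n. \<Sum>z<n. (w y * (u y)^2) * w z + w y * (w z * (u z)^2) - 2 * ((w y * u y) * (w z * u z)))"
    by (intro sum.cong refl) (simp add: power2_eq_square algebra_simps)
  also have "\<dots> = (\<Sum>y<n. \<Sum>z<n. (w y * (u y)^2) * w z) + (\<Sum>y<n. \<Sum>z<n. w y * (w z * (u z)^2))
       - 2 * (\<Sum>y<n. \<Sum>z<n. (w y * u y) * (w z * u z))"
    by (simp add: sum_subtractf sum.distrib sum_distrib_left)
  also have "\<dots> = 2 * ((\<Sum>y<n. w y) * (\<Sum>y<n. w y * (u y)^2)) - 2 * (\<Sum>y<n. w y * u y)^2"
    unfolding sum_product[symmetric] by (simp add: power2_eq_square)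
  finally show ?thesis by simp
qed

lemma tree_index_bounds:
  fixes n :: nat and dd lam :: real and Q Mf U :: "nat \<Rightarrow> nat \<Rightarrow> real" and G :: "nat \<Rightarrow> real"
  assumes dd: "dd > 2"
    and Q01: "\<And>x y. x < n \<Longrightarrow> y < n \<Longrightarrow> Q x y = 0 \<or> Q x y = 1"
    and QG: "\<And>x y. x < n \<Longrightarrow> y < n \<Longrightarrow> Q x y = 1 \<Longrightarrow> G y = G x - 1"
    and row: "\<And>x. x < n \<Longrightarrow> (\<Sum>y<n. Q x y) \<le> 1"
    and col: "\<And>y. y < n \<Longrightarrow> (\<Sum>x<n. Q x y) \<le> dd - 1"
    and Mdef: "\<And>x y. x < n \<Longrightarrow> y < n \<Longrightarrow> Mf x y = (if x = y then 1 else 0) - (Q x y + Q y x) / dd"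
    and eig: "\<And>x. x < n \<Longrightarrow> (\<Sum>y<n. Mf x y * U y i) = lam * U x i"
    and nrm: "(\<Sum>x<n. (U x i)^2) = 1"
  shows "(\<Sum>x<n. commv n Mf G U i x * G x * U x i) = (1 - lam) / 2"
    and "(\<Sum>x<n. (commv n Mf G U i x)^2) \<le> 2 * (2 * sqrt (dd - 1) / dd) * (lam - (1 - 2 * sqrt (dd - 1) / dd))"
proof -
  define u where "u y = U y i" for y
  define a where "a x = (\<Sum>y<n. Q y x * u y)" for x
  define b where "b x = (\<Sum>y<n. Q x y * u y)" for x
  define c where "c = (\<Sum>x<n. \<Sum>y<n. Q x y * u x * u y)"
  define s where "s = sqrt (dd - 1)"
  have s2: "s^2 = dd - 1" unfolding s_def using dd by simp
  have s0: "s \<ge> 0" unfolding s_def using dd by simp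
  have Q0: "Q x y \<ge> 0" if "x < n" "y < n" for x y using Q01[OF that] by auto
  have QQ: "Q x y * Q x y = Q x y" if "x < n" "y < n" for x y using Q01[OF that] by auto
  have QGa: "Q x y * (G y - G x) = - Q x y" if "x < n" "y < n" for x y
    using Q01[OF that] QG[OF that] by auto
  have QGb: "Q y x * (G y - G x) = Q y x" if "x < n" "y < n" for x y
    using Q01[OF that(2) that(1)] QG[OF that(2) that(1)] by auto
  have CV: "commv n Mf G U i x = (b x - a x) / dd" if x: "x < n" for x
  proof -
    have "commv n Mf G U i x = (\<Sum>y<n. (Q x y - Q y x) / dd * u y)"
      unfolding commv_def u_def
    proof (intro sum.cong refl)
      fix y assume y: "y \<in> {..<n}"
      have "Mf x y * (G y - G x) = - ((Q x y * (G y - G x) + Q y x * (G y - G x)) / dd)"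
        using x y by (auto simp: Mdef algebra_simps diff_divide_distrib add_divide_distrib)
      also have "\<dots> = (Q x y - Q y x) / dd" using x y by (simp add: QGa QGb diff_divide_distrib)
      finally show "Mf x y * (G y - G x) * U y i = (Q x y - Q y x) / dd * U y i" by simp
    qed
    also have "\<dots> = (b x - a x) / dd" unfolding a_def b_def
      by (simp add: sum_divide_distrib[symmetric] sum_subtractf[symmetric] algebra_simps)
    finally show ?thesis .
  qed
  have cb: "c = (\<Sum>x<n. u x * b x)" unfolding c_def b_def sum_distrib_left
    by (intro sum.cong refl) (simp add: ac_simps)
  have ca: "c = (\<Sum>x<n. u x * a x)"
  proof -
    have "c = (\<Sum>y<n. \<Sum>x<n. Q x y * u x * u y)" unfolding c_def by (rule sum.swap)
    thus ?thesis unfolding a_def by (simp add: sum_distrib_left mult.commute mult.left_commute)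
  qed
  have nrm': "(\<Sum>x<n. (u x)^2) = 1" using nrm unfolding u_def .
  have lamc: "lam = 1 - 2 * c / dd"
  proof -
    have "(\<Sum>x<n. u x * (lam * u x)) = (\<Sum>x<n. lam * (u x)^2)"
      by (intro sum.cong refl) (simp add: power2_eq_square)
    also have "\<dots> = lam * (\<Sum>x<n. (u x)^2)" by (rule sum_distrib_left[symmetric])
    finally have l1: "lam = (\<Sum>x<n. u x * (lam * u x))" using nrm' by simp
    have l2: "lam * u x = u x - (b x + a x) / dd" if x: "x < n" for x
    proof -
      have "lam * u x = (\<Sum>y<n. Mf x y * u y)" using eig[OF x] unfolding u_def by simp
      also have "\<dots> = (\<Sum>y<n. (if x = y then u y else 0) - (Q x y * u y + Q y x * u y) / dd)"
      proof (intro sum.cong refl)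
        fix y assume "y \<in> {..<n}"
        hence y: "y < n" by simp
        show "Mf x y * u y = (if x = y then u y else 0) - (Q x y * u y + Q y x * u y) / dd"
          unfolding Mdef[OF x y] by (simp add: left_diff_distrib distrib_right)
      qed
      also have "\<dots> = (\<Sum>y<n. if x = y then u y else 0) - (\<Sum>y<n. (Q x y * u y + Q y x * u y) / dd)"
        by (rule sum_subtractf)
      also have "(\<Sum>y<n. if x = y then u y else 0) = u x" using x by simp
      also have "(\<Sum>y<n. (Q x y * u y + Q y x * u y) / dd) = (\<Sum>y<n. Q x y * u y + Q y x * u y) / dd"
        by (rule sum_divide_distrib[symmetric])
      also have "(\<Sum>y<n. Q x y * u y + Q y x * u y) = b x + a x"
        unfolding a_def b_def by (rule sum.distrib)
      finally show ?thesis .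
    qed
    have "(\<Sum>x<n. u x * (lam * u x)) = (\<Sum>x<n. u x * u x - (u x * b x + u x * a x) / dd)"
    proof (intro sum.cong refl)
      fix x assume "x \<in> {..<n}"
      hence x: "x < n" by simp
      show "u x * (lam * u x) = u x * u x - (u x * b x + u x * a x) / dd"
        unfolding l2[OF x] by (simp add: right_diff_distrib distrib_left)
    qed
    also have "\<dots> = (\<Sum>x<n. u x * u x) - (\<Sum>x<n. u x * b x + u x * a x) / dd"
      by (simp only: sum_subtractf sum_divide_distrib)
    also have "(\<Sum>x<n. u x * b x + u x * a x) = (\<Sum>x<n. u x * b x) + (\<Sum>x<n. u x * a x)"
      by (rule sum.distrib)
    also have "(\<Sum>x<n. u x * u x) = 1" using nrm' by (simp add: power2_eq_square)
    finally show ?thesis using l1 cb ca by simp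
  qed
  show "(\<Sum>x<n. commv n Mf G U i x * G x * U x i) = (1 - lam) / 2"
  proof -
    have "(\<Sum>x<n. commv n Mf G U i x * G x * U x i) = (\<Sum>x<n. (b x - a x) * G x * u x) / dd"
      by (simp add: CV u_def sum_divide_distrib)
    also have "(\<Sum>x<n. (b x - a x) * G x * u x) = (\<Sum>x<n. \<Sum>y<n. Q x y * G x * u x * u y) - (\<Sum>x<n. \<Sum>y<n. Q y x * G x * u x * u y)"
      unfolding a_def b_def by (simp add: sum_subtractf[symmetric] sum_distrib_left sum_distrib_right algebra_simps)
    also have "(\<Sum>x<n. \<Sum>y<n. Q y x * G x * u x * u y) = (\<Sum>x<n. \<Sum>y<n. Q x y * G y * u x * u y)"
      by (subst sum.swap) (simp add: mult.commute mult.left_commute)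
    also have "(\<Sum>x<n. \<Sum>y<n. Q x y * G x * u x * u y) - (\<Sum>x<n. \<Sum>y<n. Q x y * G y * u x * u y) = c"
      unfolding c_def sum_subtractf[symmetric]
    proof (intro sum.cong refl)
      fix x y assume x: "x \<in> {..<n}" and y: "y \<in> {..<n}"
      have "Q x y * G x * u x * u y - Q x y * G y * u x * u y = - (Q x y * (G y - G x)) * u x * u y"
        by (simp add: algebra_simps)
      also have "\<dots> = Q x y * u x * u y" using x y by (simp add: QGa)
      finally show "Q x y * G x * u x * u y - Q x y * G y * u x * u y = Q x y * u x * u y" .
    qed
    finally show ?thesis using dd by (simp add: lamc field_simps)
  qed
  have Sa: "(\<Sum>x<n. (a x)^2) \<le> dd - 1"
  proof -
    have "(\<Sum>x<n. (a x)^2) \<le> (\<Sum>x<n. (dd - 1) * (\<Sum>y<n. Q y x * (u y)^2))"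
    proof (intro sum_mono)
      fix x assume x: "x \<in> {..<n}"
      have "(a x)^2 \<le> (\<Sum>y<n. Q y x) * (\<Sum>y<n. Q y x * (u y)^2)"
        unfolding a_def using x by (intro cs_weighted) (auto intro: Q0)
      also have "\<dots> \<le> (dd - 1) * (\<Sum>y<n. Q y x * (u y)^2)"
        using x col[of x] by (intro mult_right_mono sum_nonneg) (auto intro!: mult_nonneg_nonneg Q0)
      finally show "(a x)^2 \<le> (dd - 1) * (\<Sum>y<n. Q y x * (u y)^2)" .
    qed
    also have "\<dots> = (dd - 1) * (\<Sum>y<n. (u y)^2 * (\<Sum>x<n. Q y x))"
      by (subst sum_distrib_left[symmetric], subst sum.swap) (simp add: sum_distrib_left sum_distrib_right mult.commute)
    also have "\<dots> \<le> (dd - 1) * (\<Sum>y<n. (u y)^2 * 1)"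
      using dd row by (intro mult_left_mono sum_mono mult_left_mono) auto
    also have "\<dots> = dd - 1" using nrm unfolding u_def by simp
    finally show ?thesis .
  qed
  have Sb: "(\<Sum>x<n. (b x)^2) \<le> dd - 1"
  proof -
    have "(\<Sum>x<n. (b x)^2) \<le> (\<Sum>x<n. 1 * (\<Sum>y<n. Q x y * (u y)^2))"
    proof (intro sum_mono)
      fix x assume x: "x \<in> {..<n}"
      have "(b x)^2 \<le> (\<Sum>y<n. Q x y) * (\<Sum>y<n. Q x y * (u y)^2)"
        unfolding b_def using x by (intro cs_weighted) (auto intro: Q0)
      also have "\<dots> \<le> 1 * (\<Sum>y<n. Q x y * (u y)^2)"
        using x row[of x] by (intro mult_right_mono sum_nonneg) (auto intro!: mult_nonneg_nonneg Q0)
      finally show "(b x)^2 \<le> 1 * (\<Sum>y<n. Q x y * (u y)^2)" .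
    qed
    also have "\<dots> = (\<Sum>x<n. \<Sum>y<n. Q x y * (u y)^2)" by simp
    also have "\<dots> = (\<Sum>y<n. \<Sum>x<n. Q x y * (u y)^2)" by (rule sum.swap)
    also have "\<dots> = (\<Sum>y<n. (u y)^2 * (\<Sum>x<n. Q x y))"
      by (simp add: sum_distrib_left mult.commute)
    also have "\<dots> \<le> (\<Sum>y<n. (u y)^2 * (dd - 1))"
      using col by (intro sum_mono mult_left_mono) auto
    also have "\<dots> = dd - 1" using nrm unfolding u_def by (simp add: sum_distrib_right[symmetric])
    finally show ?thesis .
  qed
  have "(\<Sum>x<n. (b x - a x)^2) \<le> (\<Sum>x<n. 2 * (a x - s * u x)^2 + 2 * (s * u x - b x)^2)"
  proof (intro sum_mono)
    fix x
    have "0 \<le> (a x - s * u x - (s * u x - b x))^2" by simp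
    thus "(b x - a x)^2 \<le> 2 * (a x - s * u x)^2 + 2 * (s * u x - b x)^2"
      by (simp add: power2_eq_square algebra_simps)
  qed
  also have "\<dots> = 2 * ((\<Sum>x<n. (a x)^2) - 2 * s * (\<Sum>x<n. u x * a x) + s^2 * (\<Sum>x<n. (u x)^2))
             + 2 * (s^2 * (\<Sum>x<n. (u x)^2) - 2 * s * (\<Sum>x<n. u x * b x) + (\<Sum>x<n. (b x)^2))"
    by (simp add: sum.distrib sum_subtractf sum_distrib_left power2_eq_square algebra_simps)
  also have "\<dots> \<le> 2 * ((dd - 1) - 2 * s * c + s^2) + 2 * (s^2 - 2 * s * c + (dd - 1))"
    using Sa Sb by (simp add: nrm' ca[symmetric] cb[symmetric])
  also have "\<dots> = 8 * s * (s - c)" using s2 by (simp add: power2_eq_square algebra_simps)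
  finally have Sab: "(\<Sum>x<n. (b x - a x)^2) \<le> 8 * s * (s - c)" .
  have "(\<Sum>x<n. (commv n Mf G U i x)^2) = (\<Sum>x<n. (b x - a x)^2) / dd^2"
    by (simp add: CV power_divide sum_divide_distrib)
  also have "\<dots> \<le> 8 * s * (s - c) / dd^2" using Sab dd by (simp add: divide_right_mono)
  also have "\<dots> = 2 * (2 * s / dd) * (lam - (1 - 2 * s / dd))"
    using dd by (simp add: lamc field_simps power2_eq_square)
  finally show "(\<Sum>x<n. (commv n Mf G U i x)^2) \<le> 2 * (2 * sqrt (dd - 1) / dd) * (lam - (1 - 2 * sqrt (dd - 1) / dd))"
    unfolding s_def .
qed



definition allz :: "nat list \<Rightarrow> bool" where "allz x \<longleftrightarrow> (\<forall>a\<in>set x. a = 0)"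
definition tq :: "nat list \<Rightarrow> nat list" where "tq x = (if allz x then x @ [0] else butlast x)"
definition tg :: "nat list \<Rightarrow> real" where
  "tg x = real (length x) - 2 * real (length (takeWhile (\<lambda>a. a = 0) x))"

lemma allz_append[simp]: "allz (x @ [a]) \<longleftrightarrow> allz x \<and> a = 0"
  unfolding allz_def by auto

lemma allz_Nil[simp]: "allz []" unfolding allz_def by simp

lemma tg_tq: "tg (tq x) = tg x - 1"
proof (cases "allz x")
  case True
  have tw: "takeWhile (\<lambda>a. a = 0) x = x" using True unfolding allz_def by (simp add: takeWhile_eq_all_conv)
  have tw2: "takeWhile (\<lambda>a. a = 0) (x @ [0]) = x @ [0]" using True unfolding allz_def
    by (simp add: takeWhile_eq_all_conv)
  show ?thesis using True by (simp add: tq_def tg_def tw tw2)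
next
  case False
  hence ne: "x \<noteq> []" by auto
  define y where "y = butlast x"
  define a where "a = last x"
  have x: "x = y @ [a]" using ne unfolding y_def a_def by simp
  have tq: "tq x = y" using False unfolding tq_def y_def by simp
  show ?thesis
  proof (cases "allz y")
    case True
    hence a: "a \<noteq> 0" using False x by simp
    have t1: "takeWhile (\<lambda>a. a = 0) x = y" unfolding x using True a unfolding allz_def
      by (simp add: takeWhile_append2)
    have t2: "takeWhile (\<lambda>a. a = 0) y = y" using True unfolding allz_def
      by (simp add: takeWhile_eq_all_conv)
    have lx: "length x = Suc (length y)" using x by simp
    show ?thesis unfolding tq unfolding tg_def t1 t2 lx by simp
  next
    case False
    then obtain b where b: "b \<in> set y" "b \<noteq> 0" unfolding allz_def by auto
    have t1: "takeWhile (\<lambda>a. a = 0) x = takeWhile (\<lambda>a. a = 0) y" unfolding x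
      using b by (simp add: takeWhile_append1)
    have lx: "length x = Suc (length y)" using x by simp
    show ?thesis unfolding tq unfolding tg_def t1 lx by simp
  qed
qed

lemma adj_tq: "tree_adj x y \<longleftrightarrow> tq x = y \<or> tq y = x"
proof
  assume "tree_adj x y"
  then consider (a) a where "y = x @ [a]" | (b) a where "x = y @ [a]" unfolding tree_adj_def by auto
  thus "tq x = y \<or> tq y = x"
  proof cases
    case a thus ?thesis unfolding tq_def by (cases "allz x \<and> a = 0") auto
  next
    case b thus ?thesis unfolding tq_def by (cases "allz y \<and> a = 0") auto
  qed
next
  have *: "tree_adj x y" if "tq x = y" for x y
  proof (cases "allz x")
    case True thus ?thesis using that unfolding tq_def tree_adj_def by auto
  next
    case False
    hence "x \<noteq> []" by auto
    hence "x = butlast x @ [last x]" by simp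
    thus ?thesis using that False unfolding tq_def tree_adj_def by auto
  qed
  assume "tq x = y \<or> tq y = x"
  thus "tree_adj x y" using *[of x y] *[of y x] unfolding tree_adj_def by auto
qed

lemma tv_append: "x @ [a] \<in> tree_vertices d \<longleftrightarrow> x \<in> tree_vertices d \<and> a < (if x = [] then d else d - 1)"
  unfolding tree_vertices_def
  by (auto simp: nth_append less_Suc_eq)

lemma tv_butlast: "x \<in> tree_vertices d \<Longrightarrow> butlast x \<in> tree_vertices d"
  unfolding tree_vertices_def by (auto simp: nth_butlast)

lemma card_lt_nonzero: "card {a::nat. a < m \<and> a \<noteq> 0} = m - 1"
proof -
  have "{a::nat. a < m \<and> a \<noteq> 0} = {1..<m}" by auto
  thus ?thesis by simp
qed

lemma tq_preimage:
  assumes d: "d > 2"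
  shows "finite {y \<in> tree_vertices d. tq y = z} \<and> card {y \<in> tree_vertices d. tq y = z} \<le> d - 1"
proof -
  define B where "B = (if z = [] then d else d - 1)"
  define S where "S = (if allz z \<and> z \<noteq> [] then {butlast z} else {}) \<union>
     (\<lambda>a. z @ [a]) ` {a. a < B \<and> \<not> (allz z \<and> a = 0)}"
  have sub: "{y \<in> tree_vertices d. tq y = z} \<subseteq> S"
  proof
    fix y assume "y \<in> {y \<in> tree_vertices d. tq y = z}"
    hence y: "y \<in> tree_vertices d" "tq y = z" by auto
    show "y \<in> S"
    proof (cases "allz y")
      case True
      hence "z = y @ [0]" using y unfolding tq_def by simp
      thus ?thesis unfolding S_def using True by simp
    next
      case False
      hence ne: "y \<noteq> []" by auto
      have z: "z = butlast y" using y False unfolding tq_def by simp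
      have yz: "y = z @ [last y]" using ne z by simp
      have "last y < B" using y(1) yz tv_append[of z "last y" d] unfolding B_def by simp
      moreover have "\<not> (allz z \<and> last y = 0)" using False yz by (metis allz_append)
      ultimately show ?thesis unfolding S_def using yz by blast
    qed
  qed
  have fin: "finite S" unfolding S_def by simp
  have "card S \<le> card (if allz z \<and> z \<noteq> [] then {butlast z} else {}) + card ((\<lambda>a. z @ [a]) ` {a. a < B \<and> \<not> (allz z \<and> a = 0)})"
    unfolding S_def by (rule card_Un_le)
  also have "card ((\<lambda>a. z @ [a]) ` {a. a < B \<and> \<not> (allz z \<and> a = 0)}) \<le> card {a. a < B \<and> \<not> (allz z \<and> a = 0)}"
    by (rule card_image_le) simp
  finally have cS: "card S \<le> (if allz z \<and> z \<noteq> [] then 1 else 0) + card {a. a < B \<and> \<not> (allz z \<and> a = 0)}"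
    by (auto split: if_splits)
  have "card S \<le> d - 1"
  proof (cases "allz z")
    case True
    hence "card {a. a < B \<and> \<not> (allz z \<and> a = 0)} = B - 1" using card_lt_nonzero[of B] by simp
    thus ?thesis using cS True d unfolding B_def by (auto split: if_splits)
  next
    case False
    thus ?thesis using cS d unfolding B_def by (auto split: if_splits)
  qed
  thus ?thesis using sub fin by (meson card_mono finite_subset le_trans)
qed

lemma tree_nbrs:
  assumes x: "x \<in> tree_vertices d"
  shows "{y \<in> tree_vertices d. tree_adj x y} =
    (\<lambda>a. x @ [a]) ` {..<(if x = [] then d else d - 1)} \<union> (if x = [] then {} else {butlast x})"
    (is "?L = ?R")
proof (rule equalityI; rule subsetI)
  fix y assume "y \<in> ?L"
  hence y: "y \<in> tree_vertices d" "tree_adj x y" by auto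
  from y(2) consider (a) a where "y = x @ [a]" | (b) a where "x = y @ [a]" unfolding tree_adj_def by auto
  thus "y \<in> ?R"
  proof cases
    case a thus ?thesis using y(1) tv_append[of x a d] by auto
  next
    case b thus ?thesis by auto
  qed
next
  fix y assume "y \<in> ?R"
  then consider (a) a where "y = x @ [a]" "a < (if x = [] then d else d - 1)" | (b) "x \<noteq> []" "y = butlast x"
    by (auto split: if_splits)
  thus "y \<in> ?L"
  proof cases
    case a thus ?thesis using x tv_append[of x a d] unfolding tree_adj_def by auto
  next
    case b
    have "x = butlast x @ [last x]" using b by simp
    thus ?thesis using b x tv_butlast unfolding tree_adj_def by blast
  qed
qed

lemma card_tree_nbrs:
  assumes x: "x \<in> tree_vertices d" and d: "d > 2"
  shows "finite {y \<in> tree_vertices d. tree_adj x y} \<and> card {y \<in> tree_vertices d. tree_adj x y} = d"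
proof -
  have inj: "inj (\<lambda>a. x @ [a])" by (auto intro: injI)
  have c1: "card ((\<lambda>a. x @ [a]) ` {..<(if x = [] then d else d - 1)}) = (if x = [] then d else d - 1)"
    using inj by (simp add: card_image inj_on_def)
  have disj: "butlast x \<notin> (\<lambda>a. x @ [a]) ` {..<(if x = [] then d else d - 1)}"
    by (auto dest: arg_cong[of _ _ length])
  show ?thesis unfolding tree_nbrs[OF x] using c1 disj d by (auto simp: card_insert_if)
qed

lemma net_pi_tree:
  assumes x: "x \<in> tree_vertices d" and d: "d > 2"
  shows "net_pi (tree_vertices d) (tree_cond d) x = 1"
proof -
  define N where "N = {y \<in> tree_vertices d. tree_adj x y}"
  have fin: "finite N" and cN: "card N = d" using card_tree_nbrs[OF x d] unfolding N_def by auto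
  have "net_pi (tree_vertices d) (tree_cond d) x = infsum (\<lambda>y. tree_cond d x y) N"
    unfolding net_pi_def
    by (rule infsum_cong_neutral) (auto simp: N_def tree_cond_def x)
  also have "\<dots> = (\<Sum>y\<in>N. 1 / real d)" using fin
    by (simp add: N_def tree_cond_def x)
  also have "\<dots> = 1" using cN d by simp
  finally show ?thesis .
qed

lemma proots_prod_linear: "proots (\<Prod>r\<leftarrow>rs. [:-r,1:]) = mset (rs :: real list)"
proof (induction rs)
  case (Cons r rs)
  have nz1: "[:-r',1:] \<noteq> (0 :: real poly)" for r' by simp
  have nz: "(\<Prod>r\<leftarrow>rs. [:-r,1:]) \<noteq> (0 :: real poly)" using nz1 by (auto simp: prod_list_zero_iff)
  have eq: "(\<Prod>r\<leftarrow>r#rs. [:-r,1:]) = [:-r,1:] * (\<Prod>r\<leftarrow>rs. [:-r,1:])" by simp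
  have "proots (\<Prod>r\<leftarrow>r#rs. [:-r,1:]) = proots [:-r,1:] + proots (\<Prod>r\<leftarrow>rs. [:-r,1:])"
    unfolding eq by (rule proots_mult) (simp, rule nz)
  also have "proots [:-r,1:] = {#r#}" using proots_linear_factor[of "-r"] by simp
  finally show ?case using Cons by simp
qed simp

lemma spectral_pack:
  fixes A :: "real mat"
  assumes A: "A \<in> carrier_mat n n" and sym: "\<And>i j. i < n \<Longrightarrow> j < n \<Longrightarrow> A $$ (i,j) = A $$ (j,i)"
  shows "\<exists>U :: nat \<Rightarrow> nat \<Rightarrow> real. length (sorted_list_of_multiset (proots (char_poly A))) = n \<and>
     sorted (sorted_list_of_multiset (proots (char_poly A))) \<and>
     (\<forall>i<n. \<forall>j<n. (\<Sum>x<n. U x i * U x j) = (if i = j then 1 else 0)) \<and>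
     (\<forall>x<n. \<forall>y<n. (\<Sum>i<n. U x i * U y i) = (if x = y then 1 else 0)) \<and>
     (\<forall>x<n. \<forall>i<n. (\<Sum>y<n. A $$ (x,y) * U y i) = sorted_list_of_multiset (proots (char_poly A)) ! i * U x i)"
proof -
  define ev where "ev = sorted_list_of_multiset (proots (char_poly A))"
  obtain rs where rs: "char_poly A = (\<Prod>r\<leftarrow>rs. [:-r,1:])" using sym_char_poly_split[OF A sym] by blast
  have ev_sort: "ev = sort rs" unfolding ev_def rs proots_prod_linear by simp
  have cp: "char_poly A = (\<Prod>r\<leftarrow>ev. [:-r,1:])"
  proof -
    have m: "mset (map (\<lambda>r. [:-r,1:]) ev) = mset (map (\<lambda>r. [:-r,1:]) rs)"
      unfolding ev_sort by simp
    have "(\<Prod>r\<leftarrow>ev. [:-r,1:]) = (\<Prod>r\<leftarrow>rs. [:-r,1:])"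
      by (metis m prod_mset_prod_list)
    thus ?thesis using rs by simp
  qed
  have len: "length ev = n"
  proof -
    have "degree (char_poly A) = n" using degree_monic_char_poly[OF A] by simp
    moreover have "degree (\<Prod>r\<leftarrow>ev. [:-r,1:]) = length ev"
      by (subst degree_linear_factors) simp
    ultimately show ?thesis using cp by simp
  qed
  have sorted: "sorted ev" unfolding ev_sort by simp
  have symA: "A\<^sup>T = A"
    by (rule eq_matI) (use A sym in auto)
  obtain Um where Um: "Um \<in> carrier_mat n n" and U1: "Um\<^sup>T * Um = 1\<^sub>m n"
    and U2: "Um\<^sup>T * A * Um = mat n n (\<lambda>(i,j). if i = j then ev ! i else 0)"
    using spectral_sym[OF A symA cp] by blast
  have UmT: "Um\<^sup>T \<in> carrier_mat n n" using Um by simp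
  have U3: "Um * Um\<^sup>T = 1\<^sub>m n" using mat_mult_left_right_inverse[OF UmT Um U1] .
  have AU: "A * Um = Um * mat n n (\<lambda>(i,j). if i = j then ev ! i else 0)"
  proof -
    have "A * Um = (Um * Um\<^sup>T) * A * Um" using A Um by (simp add: U3)
    also have "\<dots> = Um * (Um\<^sup>T * A * Um)" using A Um UmT by (simp add: assoc_mult_mat[of _ n n _ n])
    finally show ?thesis unfolding U2 .
  qed
  define U where "U x i = Um $$ (x, i)" for x i
  have o1: "\<forall>i<n. \<forall>j<n. (\<Sum>x<n. U x i * U x j) = (if i = j then 1 else 0)"
  proof (intro allI impI)
    fix i j assume ij: "i < n" "j < n"
    have "(Um\<^sup>T * Um) $$ (i,j) = (\<Sum>x<n. U x i * U x j)"
      using ij Um by (simp add: U_def scalar_prod_def lessThan_atLeast0)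
    thus "(\<Sum>x<n. U x i * U x j) = (if i = j then 1 else 0)" using ij by (simp add: U1)
  qed
  have o2: "\<forall>x<n. \<forall>y<n. (\<Sum>i<n. U x i * U y i) = (if x = y then 1 else 0)"
  proof (intro allI impI)
    fix x y assume xy: "x < n" "y < n"
    have "(Um * Um\<^sup>T) $$ (x,y) = (\<Sum>i<n. U x i * U y i)"
      using xy Um by (simp add: U_def scalar_prod_def lessThan_atLeast0)
    thus "(\<Sum>i<n. U x i * U y i) = (if x = y then 1 else 0)" using xy by (simp add: U3)
  qed
  have eig: "\<forall>x<n. \<forall>i<n. (\<Sum>y<n. A $$ (x,y) * U y i) = ev ! i * U x i"
  proof (intro allI impI)
    fix x i assume xi: "x < n" "i < n"
    have "(A * Um) $$ (x,i) = (\<Sum>y<n. A $$ (x,y) * U y i)"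
      using xi Um A by (simp add: U_def scalar_prod_def lessThan_atLeast0)
    moreover have s: "(\<Sum>j = 0..<n. f j * (if j = i then ev ! j else 0)) = f i * ev ! i" for f :: "nat \<Rightarrow> real"
    proof -
      have "(\<Sum>j = 0..<n. f j * (if j = i then ev ! j else 0)) = (\<Sum>j = 0..<n. if j = i then f i * ev ! i else 0)"
        by (intro sum.cong refl) auto
      also have "\<dots> = f i * ev ! i" using xi by simp
      finally show ?thesis .
    qed
    moreover have "(Um * mat n n (\<lambda>(i,j). if i = j then ev ! i else 0)) $$ (x,i) = U x i * ev ! i"
      using xi Um by (simp add: U_def scalar_prod_def s)
    ultimately show "(\<Sum>y<n. A $$ (x,y) * U y i) = ev ! i * U x i" using AU by (simp add: mult.commute)
  qed
  show ?thesis unfolding ev_def[symmetric] by (intro exI[of _ U] conjI len sorted o1 o2 eig)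
qed

lemma enum_bij: assumes fin: "finite \<Omega>" shows "bij_betw (enum_of \<Omega>) {..<card \<Omega>} \<Omega>"
proof -
  obtain h where "bij_betw h {0..<card \<Omega>} \<Omega>" using ex_bij_betw_nat_finite[OF fin] by blast
  hence h: "bij_betw h {..<card \<Omega>} \<Omega>" by (simp add: lessThan_atLeast0)
  show ?thesis unfolding enum_of_def by (rule someI[of _ h]) (rule h)
qed

lemma sum_indicator_card: "(\<Sum>j<(n::nat). if P j then 1 else 0 :: real) = real (card {j. j < n \<and> P j})"
proof -
  have "real (card {j \<in> {..<n}. P j}) = (\<Sum>j\<in>{j \<in> {..<n}. P j}. 1)" by (rule real_of_card)
  also have "\<dots> = (\<Sum>j<n. if P j then 1 else 0 :: real)" by (rule sum.inter_filter) simp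
  also have "{j \<in> {..<n}. P j} = {j. j < n \<and> P j}" by auto
  finally show ?thesis by simp
qed

theorem theorem1p3:
  fixes d :: nat and \<Omega> :: "nat list set" and k :: nat
  assumes "d > 2"
    and "finite \<Omega>" and "\<Omega> \<subseteq> tree_vertices d"
    and "k < card \<Omega>"
  shows "(let ev = dirichlet_eigenvalues (tree_vertices d) (tree_cond d) \<Omega>;
              lmin = 1 - 2 * sqrt (real d - 1) / real d
          in (\<Sum>i<k. (ev ! k - ev ! i)\<^sup>2 * (1 - ev ! i))
             \<le> 8 * sqrt (real d - 1) / real d * (\<Sum>i<k. (ev ! k - ev ! i) * (ev ! i - lmin)))"
proof -
  note d = assms(1) and fin = assms(2) and sub = assms(3) and k = assms(4)
  define n where "n = card \<Omega>"
  define e where "e = enum_of \<Omega>"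
  define V where "V = tree_vertices d"
  define M where "M = dirichlet_matrix V (tree_cond d) \<Omega>"
  define ev where "ev = dirichlet_eigenvalues V (tree_cond d) \<Omega>"
  define lmin where "lmin = 1 - 2 * sqrt (real d - 1) / real d"
  define Q where "Q i j = (if tq (e i) = e j then 1 else 0 :: real)" for i j
  define G where "G i = tg (e i)" for i
  have bij: "bij_betw e {..<n} \<Omega>" unfolding e_def n_def using enum_bij[OF fin] .
  have eV: "e i \<in> V" if "i < n" for i using bij sub that unfolding V_def bij_betw_def by auto
  have einj: "inj_on e {..<n}" using bij unfolding bij_betw_def by auto
  have Mc: "M \<in> carrier_mat n n" unfolding M_def dirichlet_matrix_def n_def by simp
  have excl: "\<not> (tq x = y \<and> tq y = x)" for x y
    using tg_tq[of x] tg_tq[of y] by auto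
  have Mdef: "M $$ (x,y) = (if x = y then 1 else 0) - (Q x y + Q y x) / real d" if xy: "x < n" "y < n" for x y
  proof -
    have "net_pi V (tree_cond d) (e x) = 1" using net_pi_tree[OF eV[OF xy(1), unfolded V_def] d] unfolding V_def .
    hence "net_P V (tree_cond d) (e x) (e y) = tree_cond d (e x) (e y)" unfolding net_P_def by simp
    also have "\<dots> = (if tree_adj (e x) (e y) then 1 / real d else 0)"
      using eV[OF xy(1)] eV[OF xy(2)] unfolding tree_cond_def V_def by simp
    also have "\<dots> = (Q x y + Q y x) / real d"
      unfolding Q_def adj_tq using excl[of "e x" "e y"] by auto
    finally show ?thesis using xy unfolding M_def dirichlet_matrix_def e_def n_def by simp
  qed
  have Msym: "M $$ (x,y) = M $$ (y,x)" if "x < n" "y < n" for x y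
    using Mdef[OF that] Mdef[OF that(2) that(1)] by (simp add: add.commute)
  have ev_eq: "sorted_list_of_multiset (proots (char_poly M)) = ev"
    unfolding ev_def dirichlet_eigenvalues_def M_def ..
  from spectral_pack[OF Mc Msym, unfolded ev_eq] obtain U where U: "length ev = n \<and> sorted ev
    \<and> (\<forall>i<n. \<forall>j<n. (\<Sum>x<n. U x i * U x j) = (if i = j then 1 else 0))
    \<and> (\<forall>x<n. \<forall>y<n. (\<Sum>i<n. U x i * U y i) = (if x = y then 1 else 0))
    \<and> (\<forall>x<n. \<forall>i<n. (\<Sum>y<n. M $$ (x,y) * U y i) = ev ! i * U x i)" ..
  have len: "length ev = n" using U by (rule conjunct1)
  have sorted: "sorted ev" using U[THEN conjunct2] by (rule conjunct1)
  have o1: "\<And>i j. i < n \<Longrightarrow> j < n \<Longrightarrow> (\<Sum>x<n. U x i * U x j) = (if i = j then 1 else 0)"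
    using U[THEN conjunct2, THEN conjunct2, THEN conjunct1] by simp
  have o2: "\<And>x y. x < n \<Longrightarrow> y < n \<Longrightarrow> (\<Sum>i<n. U x i * U y i) = (if x = y then 1 else 0)"
    using U[THEN conjunct2, THEN conjunct2, THEN conjunct2, THEN conjunct1] by simp
  have eig: "\<And>x i. x < n \<Longrightarrow> i < n \<Longrightarrow> (\<Sum>y<n. M $$ (x,y) * U y i) = ev ! i * U x i"
    using U[THEN conjunct2, THEN conjunct2, THEN conjunct2, THEN conjunct2] by simp
  have srt: "ev ! i \<le> ev ! j" if "i \<le> j" "j < n" for i j
    using sorted that len by (simp add: sorted_nth_mono)
  have Q01: "Q x y = 0 \<or> Q x y = 1" for x y unfolding Q_def by auto
  have QG: "G y = G x - 1" if "Q x y = 1" for x y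
    using that tg_tq[of "e x"] unfolding Q_def G_def by (auto split: if_splits)
  have row: "(\<Sum>y<n. Q x y) \<le> 1" if x: "x < n" for x
  proof -
    have "(\<Sum>y<n. Q x y) = real (card {y. y < n \<and> tq (e x) = e y})"
      unfolding Q_def by (rule sum_indicator_card)
    also have "card {y. y < n \<and> tq (e x) = e y} \<le> card {tq (e x)}"
      by (rule card_inj_on_le[of e]) (use einj in \<open>auto simp: inj_on_def\<close>)
    finally show ?thesis by simp
  qed
  have col: "(\<Sum>x<n. Q x y) \<le> real d - 1" if y: "y < n" for y
  proof -
    have "(\<Sum>x<n. Q x y) = real (card {x. x < n \<and> tq (e x) = e y})"
      unfolding Q_def by (rule sum_indicator_card)
    also have "card {x. x < n \<and> tq (e x) = e y} \<le> card {z \<in> tree_vertices d. tq z = e y}"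
      by (rule card_inj_on_le[of e]) (use einj eV tq_preimage[OF d] in \<open>auto simp: inj_on_def V_def\<close>)
    also have "\<dots> \<le> d - 1" using tq_preimage[OF d] by blast
    finally show ?thesis using d by linarith
  qed
  have kn: "k < n" using k unfolding n_def .
  define \<rho> where "\<rho> = 2 * sqrt (real d - 1) / real d"
  have dpos: "real d > 2" using d by simp
  have bnd0: "(\<Sum>x<n. commv n (\<lambda>x y. M $$ (x,y)) G U i x * G x * U x i) = (1 - ev ! i) / 2
     \<and> (\<Sum>x<n. (commv n (\<lambda>x y. M $$ (x,y)) G U i x)^2) \<le> 2 * \<rho> * (ev ! i - lmin)"
    if i: "i < n" for i
  proof -
    have nrm: "(\<Sum>x<n. (U x i)^2) = 1" using o1[OF i i] by (simp add: power2_eq_square)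
    have eigi: "\<And>x. x < n \<Longrightarrow> (\<Sum>y<n. M $$ (x,y) * U y i) = ev ! i * U x i" using eig i by blast
    note tb = tree_index_bounds[where dd = "real d" and n = n and Q = Q and G = G and Mf = "\<lambda>x y. M $$ (x,y)"
        and U = U and i = i and lam = "ev ! i", OF dpos Q01 QG row col Mdef eigi nrm]
    show ?thesis using tb unfolding \<rho>_def lmin_def by blast
  qed
  have bndW: "(\<Sum>x<n. commv n (\<lambda>x y. M $$ (x,y)) G U i x * G x * U x i) = (1 - ev ! i) / 2"
    if "i < n" for i using bnd0[OF that] by blast
  have bndN: "(\<Sum>x<n. (commv n (\<lambda>x y. M $$ (x,y)) G U i x)^2) \<le> 2 * \<rho> * (ev ! i - lmin)"
    if "i < n" for i using bnd0[OF that] by blast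
  have main: "(\<Sum>i<k. (ev ! k - ev ! i)^2 * (\<Sum>x<n. commv n (\<lambda>x y. M $$ (x,y)) G U i x * G x * U x i))
         \<le> (\<Sum>i<k. (ev ! k - ev ! i) * (\<Sum>x<n. (commv n (\<lambda>x y. M $$ (x,y)) G U i x)^2))"
    by (rule yang_abstract[where lam = "\<lambda>i. ev ! i" and Mf = "\<lambda>x y. M $$ (x,y)" and U = U and g = G,
          OF Msym o2 eig srt kn])
  have "(\<Sum>i<k. (ev ! k - ev ! i)^2 * (1 - ev ! i))
      = (\<Sum>i<k. 2 * ((ev ! k - ev ! i)^2 * (\<Sum>x<n. commv n (\<lambda>x y. M $$ (x,y)) G U i x * G x * U x i)))"
  proof (intro sum.cong refl)
    fix i assume "i \<in> {..<k}"
    hence "i < n" using kn by auto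
    thus "(ev ! k - ev ! i)^2 * (1 - ev ! i)
      = 2 * ((ev ! k - ev ! i)^2 * (\<Sum>x<n. commv n (\<lambda>x y. M $$ (x,y)) G U i x * G x * U x i))"
      using bndW[of i] by simp
  qed
  also have "\<dots> = 2 * (\<Sum>i<k. (ev ! k - ev ! i)^2 * (\<Sum>x<n. commv n (\<lambda>x y. M $$ (x,y)) G U i x * G x * U x i))"
    by (rule sum_distrib_left[symmetric])
  also have "\<dots> \<le> 2 * (\<Sum>i<k. (ev ! k - ev ! i) * (\<Sum>x<n. (commv n (\<lambda>x y. M $$ (x,y)) G U i x)^2))"
    using main by simp
  also have "\<dots> \<le> 2 * (\<Sum>i<k. (ev ! k - ev ! i) * (2 * \<rho> * (ev ! i - lmin)))"
  proof -
    have "(\<Sum>i<k. (ev ! k - ev ! i) * (\<Sum>x<n. (commv n (\<lambda>x y. M $$ (x,y)) G U i x)^2))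
        \<le> (\<Sum>i<k. (ev ! k - ev ! i) * (2 * \<rho> * (ev ! i - lmin)))"
    proof (intro sum_mono mult_left_mono)
      fix i assume i: "i \<in> {..<k}"
      show "(\<Sum>x<n. (commv n (\<lambda>x y. M $$ (x,y)) G U i x)^2) \<le> 2 * \<rho> * (ev ! i - lmin)"
        using bndN[of i] i kn by auto
      show "0 \<le> ev ! k - ev ! i" using srt[of i k] i kn by auto
    qed
    thus ?thesis by simp
  qed
  also have "\<dots> = 8 * sqrt (real d - 1) / real d * (\<Sum>i<k. (ev ! k - ev ! i) * (ev ! i - lmin))"
    unfolding sum_distrib_left by (intro sum.cong refl) (use dpos in \<open>simp add: \<rho>_def field_simps\<close>)
  finally show ?thesis unfolding Let_def ev_def V_def lmin_def .
qed

end
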